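(* Let $n\ge 1$, let $(x_1,y_1),\dots,(x_n,y_n)\in\mathbb{R}^p\times\mathbb{R}$ and $x_{n+1}\in\mathbb{R}^p$. For every $z\in\mathbb{R}$ let $\mu_z:\mathbb{R}^p\to\mathbb{R}$ be a prediction function, and let $S:\mathbb{R}\times\mathbb{R}\to\mathbb{R}$ be a score function. Define $E_i(z)=S(y_i,\mu_z(x_i))$ for $i\in\{1,\dots,n\}$, $E_{n+1}(z)=S(z,\mu_z(x_{n+1}))$, and $$\pi(z)=1-\frac{1}{n+1}\sum_{i=1}^{n+1}\mathbb{1}_{E_i(z)\le E_{n+1}(z)}.$$ Assume the family $(\mu_z)_{z\in\mathbb{R}}$ is stable: there are constants $\tau_1,\dots,\tau_{n+1}\ge 0$ such that for every $i\in\{1,\dots,n+1\}$ and all $z,z_0,q\in\mathbb{R}$, $$|S(q,\mu_z(x_i))-S(q,\mu_{z_0}(x_i))|\le\tau_i.$$ For $z,\hat z\in\mathbb{R}$ define, for $i\in\{1,\dots,n\}$, $L_i(z,\hat z)=E_i(\hat z)-\tau_i$ and $U_i(z,\hat z)=E_i(\hat z)+\tau_i$, and $L_{n+1}(z,\hat z)=S(z,\mu_{\hat z}(x_{n+1}))-\tau_{n+1}$, $U_{n+1}(z,\hat z)=S(z,\mu_{\hat z}(x_{n+1}))+\tau_{n+1}$. Let $$\pi_{\rm lo}(z,\hat z)=1-\frac{1}{n+1}\sum_{i=1}^{n+1}\mathbb{1}_{L_i(z,\hat z)\le U_{n+1}(z,\hat z)},\qquad \pi_{\rm up}(z,\hat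 z)=1-\frac{1}{n+1}\sum_{i=1}^{n+1}\mathbb{1}_{U_i(z,\hat z)\le L_{n+1}(z,\hat z)}.$$ Then for all $z,\hat z\in\mathbb{R}$, $\pi_{\rm lo}(z,\hat z)\le\pi(z)\le\pi_{\rm up}(z,\hat z)$.
   Context: $\mathbb{1}_A$ denotes the indicator of the event/condition $A$. In the paper, $\mu_z$ is the model fitted on the augmented data $\{(x_1,y_1),\dots,(x_n,y_n),(x_{n+1},z)\}$, and $\pi(z)$ equals $1-\mathrm{Rank}(E_{n+1}(z))/(n+1)$, where $\mathrm{Rank}(u_j)=\sum_i \mathbb{1}_{u_i\le u_j}$ over the set $\{E_1(z),\dots,E_{n+1}(z)\}$. *)

theory Defs
  imports "HOL-Analysis.Analysis"
begin

definition conf_E :: "nat \<Rightarrow> (nat \<Rightarrow> real ^ 'p) \<Rightarrow> (nat \<Rightarrow> real) \<Rightarrow>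
    (real \<Rightarrow> real ^ 'p \<Rightarrow> real) \<Rightarrow> (real \<Rightarrow> real \<Rightarrow> real) \<Rightarrow> real \<Rightarrow> nat \<Rightarrow> real" where
  "conf_E n x y mu S z i = (if i = n + 1 then S z (mu z (x (n + 1))) else S (y i) (mu z (x i)))"

definition conf_pi :: "nat \<Rightarrow> (nat \<Rightarrow> real ^ 'p) \<Rightarrow> (nat \<Rightarrow> real) \<Rightarrow>
    (real \<Rightarrow> real ^ 'p \<Rightarrow> real) \<Rightarrow> (real \<Rightarrow> real \<Rightarrow> real) \<Rightarrow> real \<Rightarrow> real" where
  "conf_pi n x y mu S z = 1 - (1 / real (n + 1)) *
     (\<Sum>i = 1..n + 1. if conf_E n x y mu S z i \<le> conf_E n x y mu S z (n + 1) then 1 else 0)"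

definition conf_L :: "nat \<Rightarrow> (nat \<Rightarrow> real ^ 'p) \<Rightarrow> (nat \<Rightarrow> real) \<Rightarrow>
    (real \<Rightarrow> real ^ 'p \<Rightarrow> real) \<Rightarrow> (real \<Rightarrow> real \<Rightarrow> real) \<Rightarrow> (nat \<Rightarrow> real) \<Rightarrow>
    real \<Rightarrow> real \<Rightarrow> nat \<Rightarrow> real" where
  "conf_L n x y mu S tau z zh i = (if i = n + 1 then S z (mu zh (x (n + 1))) - tau (n + 1)
     else conf_E n x y mu S zh i - tau i)"

definition conf_U :: "nat \<Rightarrow> (nat \<Rightarrow> real ^ 'p) \<Rightarrow> (nat \<Rightarrow> real) \<Rightarrow>
    (real \<Rightarrow> real ^ 'p \<Rightarrow> real) \<Rightarrow> (real \<Rightarrow> real \<Rightarrow> real) \<Rightarrow> (nat \<Rightarrow> real) \<Rightarrow>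
    real \<Rightarrow> real \<Rightarrow> nat \<Rightarrow> real" where
  "conf_U n x y mu S tau z zh i = (if i = n + 1 then S z (mu zh (x (n + 1))) + tau (n + 1)
     else conf_E n x y mu S zh i + tau i)"

definition conf_pi_lo :: "nat \<Rightarrow> (nat \<Rightarrow> real ^ 'p) \<Rightarrow> (nat \<Rightarrow> real) \<Rightarrow>
    (real \<Rightarrow> real ^ 'p \<Rightarrow> real) \<Rightarrow> (real \<Rightarrow> real \<Rightarrow> real) \<Rightarrow> (nat \<Rightarrow> real) \<Rightarrow>
    real \<Rightarrow> real \<Rightarrow> real" where
  "conf_pi_lo n x y mu S tau z zh = 1 - (1 / real (n + 1)) *
     (\<Sum>i = 1..n + 1. if conf_L n x y mu S tau z zh i \<le> conf_U n x y mu S tau z zh (n + 1) then 1 else 0)"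

definition conf_pi_up :: "nat \<Rightarrow> (nat \<Rightarrow> real ^ 'p) \<Rightarrow> (nat \<Rightarrow> real) \<Rightarrow>
    (real \<Rightarrow> real ^ 'p \<Rightarrow> real) \<Rightarrow> (real \<Rightarrow> real \<Rightarrow> real) \<Rightarrow> (nat \<Rightarrow> real) \<Rightarrow>
    real \<Rightarrow> real \<Rightarrow> real" where
  "conf_pi_up n x y mu S tau z zh = 1 - (1 / real (n + 1)) *
     (\<Sum>i = 1..n + 1. if conf_U n x y mu S tau z zh i \<le> conf_L n x y mu S tau z zh (n + 1) then 1 else 0)"

end

theory Submission
  imports Defs
begin

theorem proposition3p2:
  fixes n :: nat and x :: "nat \<Rightarrow> real ^ 'p" and y :: "nat \<Rightarrow> real"
    and mu :: "real \<Rightarrow> real ^ 'p \<Rightarrow> real" and S :: "real \<Rightarrow> real \<Rightarrow> real"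
    and tau :: "nat \<Rightarrow> real" and z zh :: real
  assumes "n \<ge> 1"
    and "\<And>i. i \<in> {1..n + 1} \<Longrightarrow> tau i \<ge> 0"
    and "\<And>i z z0 q. i \<in> {1..n + 1} \<Longrightarrow> \<bar>S q (mu z (x i)) - S q (mu z0 (x i))\<bar> \<le> tau i"
  shows "conf_pi_lo n x y mu S tau z zh \<le> conf_pi n x y mu S z
       \<and> conf_pi n x y mu S z \<le> conf_pi_up n x y mu S tau z zh"
proof -
  let ?E = "conf_E n x y mu S z"
  let ?L = "conf_L n x y mu S tau z zh"
  let ?U = "conf_U n x y mu S tau z zh"
  have b: "?L i \<le> ?E i \<and> ?E i \<le> ?U i" if "i \<in> {1..n+1}" for i
  proof (cases "i = n + 1")
    case True
    have "\<bar>S z (mu z (x i)) - S z (mu zh (x i))\<bar> \<le> tau i" using assms(3) that by blast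
    then show ?thesis using True by (simp add: conf_E_def conf_L_def conf_U_def abs_le_iff)
  next
    case False
    have "\<bar>S (y i) (mu z (x i)) - S (y i) (mu zh (x i))\<bar> \<le> tau i" using assms(3) that by blast
    then show ?thesis using False by (simp add: conf_E_def conf_L_def conf_U_def abs_le_iff)
  qed
  have n1: "n + 1 \<in> {1..n+1}" by simp
  have s1: "(\<Sum>i = 1..n + 1. if ?E i \<le> ?E (n+1) then 1 else 0)
      \<le> (\<Sum>i = 1..n + 1. if ?L i \<le> ?U (n+1) then (1::real) else 0)"
  proof (rule sum_mono)
    fix i assume i: "i \<in> {1..n+1}"
    show "(if ?E i \<le> ?E (n+1) then 1 else 0) \<le> (if ?L i \<le> ?U (n+1) then (1::real) else 0)"
      using b[OF i] b[OF n1] by auto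
  qed
  have s2: "(\<Sum>i = 1..n + 1. if ?U i \<le> ?L (n+1) then 1 else 0)
      \<le> (\<Sum>i = 1..n + 1. if ?E i \<le> ?E (n+1) then (1::real) else 0)"
  proof (rule sum_mono)
    fix i assume i: "i \<in> {1..n+1}"
    show "(if ?U i \<le> ?L (n+1) then 1 else 0) \<le> (if ?E i \<le> ?E (n+1) then (1::real) else 0)"
      using b[OF i] b[OF n1] by auto
  qed
  have p: "0 \<le> 1 / real (n + 1)" by simp
  show ?thesis
    unfolding conf_pi_lo_def conf_pi_def conf_pi_up_def
    using mult_left_mono[OF s1 p] mult_left_mono[OF s2 p] by linarith
qed

end
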